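(* For every $m\ge1$ and $n\ge1$ there is an injective map from $Q_6(m,n)$ to $P_6(-m,n)$.
   Context: Partitions: $\lambda_1\ge\cdots\ge\lambda_\ell>0$, $\ell(\lambda)=\ell$, $\lambda_i=0$ for $i>\ell$, $s(\lambda)$ the smallest part with $s(\emptyset)=+\infty$. Rank $=\lambda_1-\ell$; rank-set $=[-\lambda_1,1-\lambda_2,\dots,\ell-1-\lambda_\ell,\ell,\ell+1,\dots]$. $Q(m,n)$: partitions of $n$ whose rank-set contains $m$; $P(-m,n)$: partitions of $n$ with rank $\ge-m$. $m$-Durfee rectangle symbol $(\alpha,\beta)_{(m+j)\times j}$ of $\lambda$: $j\ge0$ is the largest integer with $\lambda_{m+j}\ge j$; $\alpha$ is the conjugate of $(\lambda_1-j,\dots,\lambda_{m+j}-j)$ and $\beta=(\lambda_{m+j+1},\lambda_{m+j+2},\dots)$; $|\lambda|=|\alpha|+|\beta|+j(m+j)$. $Q_6(m,n)$ is the set of $\lambda\in Q(m,n)$ whose symbol has $j\ge1$, $\ell(\beta)-\ell(\alpha)\ge1$, $\alpha_1=\alpha_2=\alpha_3=m+j$ and $s(\beta)\ge2$. $P_6(-m,n)$ is the set of $\mu\in P(-m,n)$ whose symbol $(\gamma,\delta)_{(m+j')\times j'}$ has $j'\ge1$, $\ell(\gamma)=\ell(\delta)$, $\gamma_1=m+j'-2$ and $\delta_1=j'$. *)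

theory Defs
  imports Main "HOL-Library.Extended_Nat"
begin

definition is_partition :: "nat list \<Rightarrow> bool" where
  "is_partition xs \<longleftrightarrow> sorted_wrt (\<ge>) xs \<and> (\<forall>x\<in>set xs. 0 < x)"

definition partitions :: "nat \<Rightarrow> nat list set" where
  "partitions n = {xs. is_partition xs \<and> sum_list xs = n}"

text \<open>The i-th part (1-indexed), zero beyond the length.\<close>
definition part :: "nat list \<Rightarrow> nat \<Rightarrow> nat" where
  "part xs i = (if 1 \<le> i \<and> i \<le> length xs then xs ! (i - 1) else 0)"

text \<open>Smallest part, with s(empty) = infinity.\<close>
definition smallest :: "nat list \<Rightarrow> enat" where
  "smallest xs = (if xs = [] then \<infinity> else enat (Min (set xs)))"

definition prank :: "nat list \<Rightarrow> int" where
  "prank xs = int (part xs 1) - int (length xs)"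

text \<open>Rank-set [-l1, 1-l2, ..., l-1-l_l, l, l+1, ...] = { k-1-l_k : k >= 1 }.\<close>
definition rank_set :: "nat list \<Rightarrow> int set" where
  "rank_set xs = {int k - 1 - int (part xs k) | k. 1 \<le> k}"

definition Qset :: "nat \<Rightarrow> nat \<Rightarrow> nat list set" where
  "Qset m n = {xs \<in> partitions n. int m \<in> rank_set xs}"

text \<open>P(-m,n): partitions of n with rank at least -m.\<close>
definition Pset :: "nat \<Rightarrow> nat \<Rightarrow> nat list set" where
  "Pset m n = {xs \<in> partitions n. prank xs \<ge> - int m}"

definition conjugate :: "nat list \<Rightarrow> nat list" where
  "conjugate ys = map (\<lambda>i. length (filter (\<lambda>y. i \<le> y) ys)) [1..<foldr max ys 0 + 1]"

text \<open>m-Durfee rectangle symbol (alpha, beta) of size (m+j) x j.\<close>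
definition durfee_j :: "nat \<Rightarrow> nat list \<Rightarrow> nat" where
  "durfee_j m xs = (GREATEST j. j \<le> part xs (m + j))"

definition durfee_alpha :: "nat \<Rightarrow> nat list \<Rightarrow> nat list" where
  "durfee_alpha m xs = (let j = durfee_j m xs in
     conjugate (map (\<lambda>k. part xs k - j) [1..<m + j + 1]))"

definition durfee_beta :: "nat \<Rightarrow> nat list \<Rightarrow> nat list" where
  "durfee_beta m xs = drop (m + durfee_j m xs) xs"

definition Q6 :: "nat \<Rightarrow> nat \<Rightarrow> nat list set" where
  "Q6 m n = {xs \<in> Qset m n.
     (let j = durfee_j m xs; \<alpha> = durfee_alpha m xs; \<beta> = durfee_beta m xs in
       1 \<le> j \<and> int (length \<beta>) - int (length \<alpha>) \<ge> 1 \<and>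
       part \<alpha> 1 = m + j \<and> part \<alpha> 2 = m + j \<and> part \<alpha> 3 = m + j \<and>
       smallest \<beta> \<ge> 2)}"

definition P6 :: "nat \<Rightarrow> nat \<Rightarrow> nat list set" where
  "P6 m n = {xs \<in> Pset m n.
     (let j = durfee_j m xs; \<gamma> = durfee_alpha m xs; \<delta> = durfee_beta m xs in
       1 \<le> j \<and> length \<gamma> = length \<delta> \<and>
       int (part \<gamma> 1) = int m + int j - 2 \<and> part \<delta> 1 = j)}"

end

theory Submission
  imports Defs
begin


declare upt_Suc[simp del]

definition cnt :: "nat list \<Rightarrow> nat \<Rightarrow> nat" where
  "cnt xs i = length (filter (\<lambda>y. i \<le> y) xs)"

lemma upt1_nth: "i < N \<Longrightarrow> [Suc 0..<Suc N] ! i = Suc i"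
  by (simp add: nth_upt del: upt_Suc)

lemma map_upt1_nth: "i < N \<Longrightarrow> map f [Suc 0..<Suc N] ! i = f (Suc i)"
  by (simp add: upt1_nth del: upt_Suc)

lemma length_map_upt1: "length (map f [Suc 0..<Suc N]) = N" by simp

lemma foldr_max_ge: "y \<in> set xs \<Longrightarrow> y \<le> foldr max xs (0::nat)"
  by (induction xs) auto

lemma foldr_max_sorted: "sorted_wrt (\<ge>) xs \<Longrightarrow> foldr max xs (0::nat) = part xs 1"
proof (induction xs)
  case Nil
  then show ?case by (simp add: part_def)
next
  case (Cons a xs)
  have "part xs 1 \<le> a"
    using Cons.prems by (cases xs) (auto simp: part_def)
  then show ?case using Cons by (simp add: part_def)
qed

lemma part_le_max: "part xs k \<le> foldr max xs 0"
  unfolding part_def by (auto intro!: foldr_max_ge)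

lemma cnt_zero: "foldr max xs 0 < i \<Longrightarrow> cnt xs i = 0"
  unfolding cnt_def using foldr_max_ge[of _ xs] by (auto simp: filter_empty_conv) (meson le_trans not_le)

lemma conj_alt: "conjugate xs = map (cnt xs) [Suc 0..<Suc (foldr max xs 0)]"
  by (simp add: conjugate_def cnt_def)

lemma length_conj: "length (conjugate xs) = foldr max xs 0"
  by (simp add: conjugate_def)

lemma part_conj: "1 \<le> i \<Longrightarrow> part (conjugate xs) i = cnt xs i"
proof (cases "i \<le> foldr max xs 0")
  case True
  assume "1 \<le> i"
  then show ?thesis using True
  proof -
    have "i - 1 < foldr max xs 0" using True \<open>1 \<le> i\<close> by simp
    then show ?thesis using True \<open>1 \<le> i\<close>
      unfolding part_def conj_alt by (simp only: map_upt1_nth length_map_upt1) simp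
  qed
next
  case False
  then show ?thesis by (simp add: part_def length_conj cnt_zero)
qed

lemma cnt_le_length: "cnt xs i \<le> length xs"
  by (simp add: cnt_def)

lemma cnt_antimono: "i \<le> i' \<Longrightarrow> cnt xs i' \<le> cnt xs i"
  unfolding cnt_def by (induction xs) auto

lemma cnt_iff: "sorted_wrt (\<ge>) ys \<Longrightarrow> 1 \<le> k \<Longrightarrow> 1 \<le> i \<Longrightarrow> (k \<le> cnt ys i) = (i \<le> part ys k)"
proof (induction ys arbitrary: k)
  case Nil
  then show ?case by (simp add: cnt_def part_def)
next
  case (Cons y ys)
  have s: "sorted_wrt (\<ge>) ys" "\<forall>z\<in>set ys. z \<le> y" using Cons.prems by auto
  show ?case
  proof (cases "i \<le> y")
    case True
    have c: "cnt (y#ys) i = Suc (cnt ys i)" using True by (simp add: cnt_def)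
    show ?thesis
    proof (cases "k = 1")
      case True
      then show ?thesis using c \<open>i \<le> y\<close> by (simp add: part_def)
    next
      case False
      then have "k - 1 \<ge> 1" using Cons.prems by auto
      then have "(k - 1 \<le> cnt ys i) = (i \<le> part ys (k-1))" using Cons.IH[OF s(1) _ Cons.prems(3)] by auto
      moreover have "part (y#ys) k = part ys (k-1)" using False Cons.prems
        by (auto simp: part_def nth_Cons')
      ultimately show ?thesis using c False Cons.prems by auto
    qed
  next
    case False
    have "cnt ys i = 0" unfolding cnt_def using s False by (auto simp: filter_empty_conv)
    then have c: "cnt (y#ys) i = 0" using False by (simp add: cnt_def)
    have "part (y#ys) k < i"
    proof -
      have "part (y#ys) k \<le> y"
        using s by (auto simp: part_def nth_Cons' split: if_splits)
      then show ?thesis using False by simp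
    qed
    then show ?thesis using c Cons.prems by auto
  qed
qed

lemma part_antimono: assumes "sorted_wrt (\<ge>) xs" "1 \<le> k" "k \<le> k'"
  shows "part xs k' \<le> part xs k"
proof (cases "k' \<le> length xs")
  case True
  then show ?thesis using assms
    by (cases "k = k'") (auto simp: part_def sorted_wrt_iff_nth_less)
qed (simp add: part_def)

lemma card_lt: "card {i. i < (n::nat)} = n" by simp

lemma cnt_map_upt: "cnt (map f [Suc 0..<Suc (N)]) k = card {c. 1 \<le> c \<and> c \<le> N \<and> k \<le> f c}"
proof -
  have "cnt (map f [Suc 0..<Suc (N)]) k = card {i. i < N \<and> k \<le> map f [Suc 0..<Suc (N)] ! i}"
    unfolding cnt_def by (simp only: length_filter_conv_card length_map_upt1)
  also have "{i. i < N \<and> k \<le> map f [Suc 0..<Suc (N)] ! i} = {i. i < N \<and> k \<le> f (i+1)}"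
    by (auto simp: map_upt1_nth simp del: upt_Suc)
  also have "card \<dots> = card ((\<lambda>i. i+1) ` {i. i < N \<and> k \<le> f (i+1)})"
    by (simp add: card_image)
  also have "(\<lambda>i. i+1) ` {i. i < N \<and> k \<le> f (i+1)} = {c. 1 \<le> c \<and> c \<le> N \<and> k \<le> f c}"
    apply (auto simp: image_def)
    by (metis Suc_eq_plus1 Suc_le_D Suc_le_eq)
  finally show ?thesis .
qed

lemma cnt_conj: assumes "sorted_wrt (\<ge>) ys" "1 \<le> k"
  shows "cnt (conjugate ys) k = part ys k"
proof -
  let ?M = "foldr max ys 0"
  have "cnt (conjugate ys) k = card {c. 1 \<le> c \<and> c \<le> ?M \<and> k \<le> cnt ys c}"
  proof -
    have "conjugate ys = map (cnt ys) [Suc 0..<Suc ?M]" by (rule conj_alt)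
    then show ?thesis by (simp only: cnt_map_upt)
  qed
  also have "{c. 1 \<le> c \<and> c \<le> ?M \<and> k \<le> cnt ys c} = {1..part ys k}"
    using cnt_iff[OF assms] part_le_max[of ys k] by auto
  finally show ?thesis by simp
qed

lemma conj_map_cnt:
  assumes "sorted_wrt (\<ge>) g" "\<forall>x\<in>set g. 0 < x" "part g 1 \<le> N"
  shows "conjugate (map (cnt g) [Suc 0..<Suc (N)]) = g"
proof (rule nth_equalityI)
  have srt: "sorted_wrt (\<ge>) (map (cnt g) [Suc 0..<Suc (N)])"
    by (auto simp: sorted_wrt_map sorted_wrt_iff_nth_less cnt_antimono nth_upt simp del: upt_Suc)
  have len: "length (conjugate (map (cnt g) [Suc 0..<Suc (N)])) = length g"
  proof (cases "g = []")
    case True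
    have z: "\<forall>y\<in>set xs. y = 0 \<Longrightarrow> foldr max xs 0 = (0::nat)" for xs
      by (induction xs) auto
    have "foldr max (map (cnt []) [Suc 0..<Suc (N)]) 0 = 0"
      by (rule z) (auto simp: cnt_def)
    then show ?thesis using True by (simp add: length_conj del: upt_Suc)
  next
    case False
    then have "N \<ge> 1" using assms by (cases g) (auto simp: part_def)
    then have "part (map (cnt g) [Suc 0..<Suc (N)]) 1 = cnt g 1" by (simp add: part_def map_upt1_nth del: upt_Suc)
    moreover have "cnt g 1 = length g" using assms(2) by (simp add: cnt_def filter_id_conv Suc_le_eq)
    ultimately show ?thesis unfolding length_conj foldr_max_sorted[OF srt] by simp
  qed
  then show "length (conjugate (map (cnt g) [Suc 0..<Suc (N)])) = length g" .
  fix i assume i: "i < length (conjugate (map (cnt g) [Suc 0..<Suc (N)]))"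
  have "conjugate (map (cnt g) [Suc 0..<Suc (N)]) ! i = part (conjugate (map (cnt g) [Suc 0..<Suc (N)])) (i+1)"
    using i by (simp add: part_def)
  also have "\<dots> = cnt (map (cnt g) [Suc 0..<Suc (N)]) (i+1)" by (simp add: part_conj)
  also have "\<dots> = card {c. 1 \<le> c \<and> c \<le> N \<and> i+1 \<le> cnt g c}" by (simp only: cnt_map_upt)
  also have "{c. 1 \<le> c \<and> c \<le> N \<and> i+1 \<le> cnt g c} = {1..part g (i+1)}"
  proof -
    have "part g (i+1) \<le> part g 1" by (rule part_antimono[OF assms(1)]) auto
    then have "part g (i+1) \<le> N" using assms(3) by simp
    then show ?thesis using cnt_iff[OF assms(1), of "i+1"] by auto
  qed
  also have "card {1..part g (i+1)} = g ! i" using i len by (simp add: part_def)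
  finally show "conjugate (map (cnt g) [Suc 0..<Suc (N)]) ! i = g ! i" .
qed



definition fs :: "nat \<Rightarrow> nat \<Rightarrow> nat list \<Rightarrow> nat list \<Rightarrow> nat list" where
  "fs m j g d = map (\<lambda>k. j + cnt g k) [Suc 0..<Suc (m+j)] @ d"

lemma part_append: "part (xs @ ys) k = (if k \<le> length xs then part xs k else part ys (k - length xs))"
  by (auto simp: part_def nth_append)

lemma part_map_upt1: "1 \<le> k \<Longrightarrow> k \<le> N \<Longrightarrow> part (map f [Suc 0..<Suc N]) k = f k"
  by (simp add: part_def map_upt1_nth del: upt_Suc)

lemma part_pos_list: "1 \<le> k \<Longrightarrow> k \<le> length xs \<Longrightarrow> part xs k = xs ! (k-1)"
  by (simp add: part_def)

lemma cnt_Cons: "cnt (y#ys) i = (if i \<le> y then 1 else 0) + cnt ys i"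
  by (simp add: cnt_def)

lemma sum_card_le: "(y::nat) \<le> N \<Longrightarrow> (\<Sum>i\<in>{1..N}. (if i \<le> y then 1 else 0::nat)) = y"
proof -
  assume "y \<le> N"
  have "(\<Sum>i\<in>{1..N}. (if i \<le> y then 1 else 0::nat)) = card {i\<in>{1..N}. i \<le> y}"
    by (simp add: sum.If_cases Int_def)
  also have "{i\<in>{1..N}. i \<le> y} = {1..y}" using \<open>y \<le> N\<close> by auto
  finally show ?thesis by simp
qed

lemma sum_cnt: "\<forall>y\<in>set g. y \<le> N \<Longrightarrow> (\<Sum>i\<in>{Suc 0..N}. cnt g i) = sum_list g"
proof (induction g)
  case Nil
  then show ?case by (simp add: cnt_def)
next
  case (Cons y ys)
  have "(\<Sum>i\<in>{Suc 0..N}. cnt (y#ys) i) = (\<Sum>i\<in>{1..N}. (if i \<le> y then 1 else 0::nat)) + (\<Sum>i\<in>{Suc 0..N}. cnt ys i)"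
    by (simp add: cnt_Cons sum.distrib)
  then show ?case using Cons sum_card_le[of y N] by simp
qed

lemma sum_list_map_upt1: "sum_list (map f [Suc 0..<Suc N]) = (\<Sum>i\<in>{Suc 0..N}. f i)"
proof -
  have "sum_list (map f [Suc 0..<Suc (N)]) = sum f (set [Suc 0..<Suc (N)])"
    by (rule sum_set_upt_conv_sum_list_nat[symmetric])
  also have "set [Suc 0..<Suc (N)] = {Suc 0..N}" by (auto simp: atLeastLessThanSuc_atLeastAtMost)
  finally show ?thesis .
qed

lemma part_le_hd: "sorted_wrt (\<ge>) xs \<Longrightarrow> 1 \<le> k \<Longrightarrow> part xs k \<le> part xs 1"
  using part_antimono by auto

lemma mem_le_part1: "sorted_wrt (\<ge>) xs \<Longrightarrow> y \<in> set xs \<Longrightarrow> y \<le> part xs 1"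
  using foldr_max_ge foldr_max_sorted by metis

lemma cnt1_len: "\<forall>x\<in>set g. 0 < x \<Longrightarrow> cnt g 1 = length g"
  by (simp add: cnt_def filter_id_conv Suc_le_eq)

lemma durfee_alpha_alt: "durfee_alpha m xs = conjugate (map (\<lambda>k. part xs k - durfee_j m xs) [Suc 0..<Suc (m + durfee_j m xs)])"
  by (simp add: durfee_alpha_def Let_def)

locale symb =
  fixes m j :: nat and g d :: "nat list"
  assumes j1: "1 \<le> j"
    and gs: "sorted_wrt (\<ge>) g" and gp: "\<forall>x\<in>set g. 0 < x" and g1: "part g 1 \<le> m + j"
    and ds: "sorted_wrt (\<ge>) d" and dp: "\<forall>x\<in>set d. 0 < x" and d1: "part d 1 \<le> j"
begin

lemma part_fs_top: "1 \<le> k \<Longrightarrow> k \<le> m + j \<Longrightarrow> part (fs m j g d) k = j + cnt g k"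
  unfolding fs_def by (simp add: part_append part_map_upt1 del: upt_Suc)

lemma part_fs_bot: "m + j < k \<Longrightarrow> part (fs m j g d) k = part d (k - (m+j))"
  unfolding fs_def by (simp add: part_append del: upt_Suc)

lemma length_fs: "length (fs m j g d) = m + j + length d"
  by (simp add: fs_def)

lemma fs_partition: "is_partition (fs m j g d)"
proof -
  have s1: "sorted_wrt (\<ge>) (map (\<lambda>k. j + cnt g k) [Suc 0..<Suc (m+j)])"
    by (auto simp: sorted_wrt_map sorted_wrt_iff_nth_less cnt_antimono nth_upt simp del: upt_Suc)
  have "\<forall>y\<in>set d. y \<le> j" using d1 mem_le_part1[OF ds] by fastforce
  then have s2: "\<forall>x\<in>set (map (\<lambda>k. j + cnt g k) [Suc 0..<Suc (m+j)]). \<forall>y\<in>set d. y \<le> x"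
    by auto
  show ?thesis unfolding is_partition_def fs_def using s1 s2 ds dp j1
    by (auto simp: sorted_wrt_append)
qed

lemma durfee_j_fs: "durfee_j m (fs m j g d) = j"
  unfolding durfee_j_def
proof (rule Greatest_equality)
  show "j \<le> part (fs m j g d) (m + j)" using j1 by (simp add: part_fs_top)
  fix y assume y: "y \<le> part (fs m j g d) (m + y)"
  show "y \<le> j"
  proof (rule ccontr)
    assume "\<not> y \<le> j"
    then have "part (fs m j g d) (m + y) = part d (y - j)" by (simp add: part_fs_bot)
    also have "\<dots> \<le> part d 1" using \<open>\<not> y \<le> j\<close> by (intro part_antimono[OF ds]) auto
    finally show False using y d1 \<open>\<not> y \<le> j\<close> by simp
  qed
qed

lemma durfee_alpha_fs: "durfee_alpha m (fs m j g d) = g"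
proof -
  have eq: "map (\<lambda>k. part (fs m j g d) k - j) [Suc 0..<Suc (m + j)] = map (cnt g) [Suc 0..<Suc (m+j)]"
    by (rule map_cong) (auto simp: part_fs_top)
  show ?thesis unfolding durfee_alpha_alt durfee_j_fs eq
    by (rule conj_map_cnt[OF gs gp g1])
qed

lemma durfee_beta_fs: "durfee_beta m (fs m j g d) = d"
  unfolding durfee_beta_def durfee_j_fs by (simp add: fs_def)

lemma sum_fs: "sum_list (fs m j g d) = (m+j)*j + sum_list g + sum_list d"
proof -
  have "\<forall>y\<in>set g. y \<le> m + j" using g1 mem_le_part1[OF gs] by fastforce
  then show ?thesis
    by (simp add: fs_def sum_list_map_upt1 sum.distrib sum_cnt del: upt_Suc)
qed

lemma part1_fs: "part (fs m j g d) 1 = j + length g"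
  using part_fs_top[of 1] j1 cnt1_len[OF gp] by simp

end



lemma sum_part_gen:
  assumes "length xs \<le> T"
  shows "(\<Sum>k\<in>{Suc 0..T}. f (part xs k)) = sum_list (map f xs) + (T - length xs) * f 0"
  using assms
proof (induction T arbitrary: xs)
  case 0
  then show ?case by simp
next
  case (Suc T)
  show ?case
  proof (cases "length xs \<le> T")
    case True
    have "part xs (Suc T) = 0" using True by (simp add: part_def)
    then show ?thesis using Suc.IH[OF True] True
      by (simp add: Suc_diff_le)
  next
    case False
    then have len: "length xs = Suc T" using Suc.prems by simp
    then obtain ys y where xs: "xs = ys @ [y]"
      by (metis length_Suc_conv_rev)
    have l: "length ys = T" using len xs by simp
    have "(\<Sum>k\<in>{Suc 0..Suc T}. f (part xs k)) = (\<Sum>k\<in>{Suc 0..T}. f (part xs k)) + f (part xs (Suc T))"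
      by simp
    also have "(\<Sum>k\<in>{Suc 0..T}. f (part xs k)) = (\<Sum>k\<in>{Suc 0..T}. f (part ys k))"
      by (rule sum.cong) (auto simp: xs part_append l)
    also have "\<dots> = sum_list (map f ys)" using Suc.IH[of ys] l by simp
    also have "part xs (Suc T) = y" using xs l by (simp add: part_def nth_append)
    finally show ?thesis using xs l by simp
  qed
qed

lemma sum_part: "length xs \<le> T \<Longrightarrow> (\<Sum>k\<in>{Suc 0..T}. part xs k) = sum_list xs"
  using sum_part_gen[of xs T "\<lambda>x. x"] by simp

lemma arith_aux: "2*L \<le> (Sb::nat) \<Longrightarrow> 2*tt + r = m - 1 \<Longrightarrow> P = Q + m + 2*j + 1 \<Longrightarrow>
  G = m + j - 1 + (L + tt) + V \<Longrightarrow> D = j + 1 + (L + tt) + U \<Longrightarrow> U + V = Sb - 2*L + Sa + r \<Longrightarrow>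
  A = 3*(m+j) + Sa \<Longrightarrow> B = j + Sb \<Longrightarrow> 1 \<le> m \<Longrightarrow> 2 \<le> j \<Longrightarrow> P + G + D = Q + A + B"
  by simp

lemma sum_list_ge: "\<forall>x\<in>set xs. c \<le> x \<Longrightarrow> c * length xs \<le> sum_list (xs::nat list)"
  by (induction xs) auto

lemma sum_list_minus: "\<forall>x\<in>set xs. c \<le> x \<Longrightarrow> sum_list (map (\<lambda>x. x - c) xs) = sum_list xs - c * length xs"
proof (induction xs)
  case (Cons a xs)
  have "c * length xs \<le> sum_list xs"
    using Cons.prems by (induction xs) auto
  then show ?case using Cons by (auto simp: algebra_simps)
qed simp

lemma list_eq_parts:
  assumes "\<forall>x\<in>set xs. 0 < x" "\<forall>x\<in>set ys. 0 < x" "length xs \<le> T" "length ys \<le> T"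
    "\<forall>k. 1 \<le> k \<and> k \<le> T \<longrightarrow> part xs k = part ys k"
  shows "xs = ys"
proof -
  have pos: "\<forall>x\<in>set zs. 0 < x \<Longrightarrow> 1 \<le> k \<Longrightarrow> k \<le> length zs \<Longrightarrow> 0 < part zs k" for zs k
    by (auto simp: part_def)
  have "length xs = length ys"
  proof (rule ccontr)
    assume ne: "length xs \<noteq> length ys"
    show False
    proof (cases "length xs < length ys")
      case True
      then have "0 < part ys (length ys)" using pos[OF assms(2)] by simp
      moreover have "part xs (length ys) = 0" using True by (simp add: part_def)
      ultimately show False using assms(4,5) True by (metis less_nat_zero_code less_one linorder_not_le)
    next
      case False
      then have F: "length ys < length xs" using ne by simp
      then have "0 < part xs (length xs)" using pos[OF assms(1)] by simp
      moreover have "part ys (length xs) = 0" using F by (simp add: part_def)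
      ultimately show False using assms(3,5) F by (metis less_nat_zero_code less_one linorder_not_le)
    qed
  qed
  then show ?thesis
  proof (rule nth_equalityI)
    fix i assume "i < length xs"
    then have "part xs (Suc i) = part ys (Suc i)" using assms(3,5) by auto
    then show "xs ! i = ys ! i" using \<open>i < length xs\<close> \<open>length xs = length ys\<close> by (simp add: part_def)
  qed
qed

lemma sorted_map_upt1: "(\<And>k k'. 1 \<le> k \<Longrightarrow> k \<le> k' \<Longrightarrow> f k' \<le> f k) \<Longrightarrow> sorted_wrt (\<ge>) (map f [Suc 0..<Suc N])"
  by (auto simp: sorted_wrt_map sorted_wrt_iff_nth_less nth_upt)

locale qdata =
  fixes m j :: nat and a b :: "nat list"
  assumes m1: "1 \<le> m" and j2: "2 \<le> j"
    and as: "sorted_wrt (\<ge>) a" and ap: "\<forall>x\<in>set a. 0 < x" and a1: "part a 1 \<le> m + j"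
    and a3: "part a 3 = m + j" and alen: "3 \<le> length a"
    and bs: "sorted_wrt (\<ge>) b" and b2: "\<forall>x\<in>set b. 2 \<le> x" and b1: "part b 1 = j"
    and blen: "length a + 1 \<le> length b"
begin

definition "K = m + j"
definition "L = length b - 1"
definition "tt = (m - 1) div 2"
definition "r = (m - 1) mod 2"
definition "T = L + tt"
definition "Xf k = part (tl b) k - 2"
definition "Ylist = drop 3 a @ replicate r 1"
definition "Yf k = part Ylist k"
definition "Xc z = (if z = 0 then j - 2 else Xf z)"
definition "z0 = (LEAST z. Yf (Suc z) \<le> Xc z + m)"
definition "Uf k = (if k \<le> z0 then Yf k - m else Xf k)"
definition "Vf k = (if k \<le> z0 then Xf k + m else Yf k)"
definition "Gam = (K - 1) # map (\<lambda>k. Suc (Vf k)) [Suc 0..<Suc T]"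
definition "Del = (j + 1) # map (\<lambda>k. Suc (Uf k)) [Suc 0..<Suc T]"

lemma b_le_j: "x \<in> set b \<Longrightarrow> x \<le> j"
  using mem_le_part1[OF bs] b1 by auto

lemma a_le_K: "x \<in> set a \<Longrightarrow> x \<le> K"
  using mem_le_part1[OF as] a1 K_def by fastforce

lemma tlb_sorted: "sorted_wrt (\<ge>) (tl b)"
  using bs by (cases b) auto

lemma tlb_len: "length (tl b) = L" by (simp add: L_def)

lemma tlb_ge2: "x \<in> set (tl b) \<Longrightarrow> 2 \<le> x"
  using b2 by (cases b) auto

lemma tlb_le: "x \<in> set (tl b) \<Longrightarrow> x \<le> j"
  using b_le_j by (cases b) auto

lemma L3: "3 \<le> L" using alen blen L_def by simp

lemma Xf_le: "Xf k \<le> j - 2"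
proof -
  have "part (tl b) k \<le> j"
    using tlb_le by (auto simp: part_def)
  then show ?thesis by (simp add: Xf_def)
qed

lemma Xf_mono: "1 \<le> k \<Longrightarrow> k \<le> k' \<Longrightarrow> Xf k' \<le> Xf k"
  unfolding Xf_def using part_antimono[OF tlb_sorted] by (simp add: diff_le_mono)

lemma Xc_mono: "k \<le> k' \<Longrightarrow> Xc k' \<le> Xc k"
  unfolding Xc_def using Xf_mono Xf_le by (auto simp: Xc_def)

lemma Xc_le: "Xc k \<le> j - 2"
  unfolding Xc_def using Xf_le by auto

lemma Ylist_sorted: "sorted_wrt (\<ge>) Ylist"
proof -
  have "\<forall>x\<in>set (drop 3 a). 1 \<le> x" using ap by (auto dest: in_set_dropD simp: Suc_le_eq)
  moreover have "sorted_wrt (\<ge>) (replicate n (1::nat))" for n by (induction n) auto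
  ultimately show ?thesis using as unfolding Ylist_def
    by (auto simp: sorted_wrt_append sorted_wrt_drop)
qed

lemma Ylist_pos: "\<forall>x\<in>set Ylist. 0 < x"
  using ap by (auto simp: Ylist_def dest: in_set_dropD)

lemma Ylist_len: "length Ylist + 2 \<le> L"
  using alen blen L_def r_def by (simp add: Ylist_def)

lemma Yf_le: "Yf k \<le> K"
proof -
  have "\<forall>x\<in>set Ylist. x \<le> K" using a_le_K K_def m1 by (auto simp: Ylist_def dest: in_set_dropD)
  then show ?thesis by (auto simp: Yf_def part_def)
qed

lemma Yf_mono: "1 \<le> k \<Longrightarrow> k \<le> k' \<Longrightarrow> Yf k' \<le> Yf k"
  unfolding Yf_def using part_antimono[OF Ylist_sorted] by simp

lemma Yf_zero: "length Ylist < k \<Longrightarrow> Yf k = 0"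
  by (simp add: Yf_def part_def)

lemma z0_ex: "Yf (Suc (L - 2)) \<le> Xc (L - 2) + m"
  using Yf_zero Ylist_len L3 by simp

lemma z0_le: "z0 \<le> L - 2"
  unfolding z0_def by (rule Least_le) (rule z0_ex)

lemma z0_cond: "Yf (Suc z0) \<le> Xc z0 + m"
  unfolding z0_def by (rule LeastI) (rule z0_ex)

lemma z0_min: "1 \<le> k \<Longrightarrow> k \<le> z0 \<Longrightarrow> Xc (k - 1) + m < Yf k"
proof -
  assume k: "1 \<le> k" "k \<le> z0"
  then have "k - 1 < z0" by simp
  then have "\<not> Yf (Suc (k-1)) \<le> Xc (k-1) + m" unfolding z0_def by (rule not_less_Least)
  then show ?thesis using k by simp
qed

lemma Yf_big: "1 \<le> k \<Longrightarrow> k \<le> z0 \<Longrightarrow> m < Yf k"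
  using z0_min by fastforce

lemma Uf_le: "Uf k \<le> j"
  using Yf_le[of k] Xf_le[of k] K_def unfolding Uf_def by auto

lemma Vf_le: "1 \<le> k \<Longrightarrow> Vf k \<le> K - 2"
proof -
  assume k: "1 \<le> k"
  show ?thesis
  proof (cases "k \<le> z0")
    case True
    then show ?thesis using Xf_le[of k] j2 K_def by (simp add: Vf_def)
  next
    case False
    then have "Yf k \<le> Yf (Suc z0)" using Yf_mono by simp
    also have "\<dots> \<le> Xc z0 + m" by (rule z0_cond)
    also have "\<dots> \<le> K - 2" using Xc_le[of z0] j2 K_def by simp
    finally show ?thesis using False by (simp add: Vf_def)
  qed
qed

lemma Uf_mono: "1 \<le> k \<Longrightarrow> k \<le> k' \<Longrightarrow> Uf k' \<le> Uf k"
proof -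
  assume k: "1 \<le> k" "k \<le> k'"
  show ?thesis
  proof (cases "k' \<le> z0")
    case True
    then show ?thesis using k Yf_mono[of k k'] by (simp add: Uf_def diff_le_mono)
  next
    case False
    show ?thesis
    proof (cases "k \<le> z0")
      case True
      have "Xf k' \<le> Xc (z0 - 1)"
      proof -
        have "Xc k' \<le> Xc (z0 - 1)" by (rule Xc_mono) (use False in simp)
        then show ?thesis using False k by (simp add: Xc_def split: if_splits)
      qed
      also have "Xc (z0 - 1) \<le> Xc (k - 1)" by (rule Xc_mono) (use True in simp)
      also have "\<dots> < Yf k - m" using z0_min[OF k(1) True] by simp
      finally show ?thesis using True False by (simp add: Uf_def)
    next
      case False
      then show ?thesis using \<open>\<not> k' \<le> z0\<close> Xf_mono k by (simp add: Uf_def)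
    qed
  qed
qed

lemma Vf_mono: "1 \<le> k \<Longrightarrow> k \<le> k' \<Longrightarrow> Vf k' \<le> Vf k"
proof -
  assume k: "1 \<le> k" "k \<le> k'"
  show ?thesis
  proof (cases "k' \<le> z0")
    case True
    then show ?thesis using k Xf_mono[of k k'] by (simp add: Vf_def)
  next
    case False
    show ?thesis
    proof (cases "k \<le> z0")
      case True
      have "Yf k' \<le> Yf (Suc z0)" using False Yf_mono[of "Suc z0" k'] by simp
      also have "\<dots> \<le> Xc z0 + m" by (rule z0_cond)
      also have "Xc z0 \<le> Xc k" by (rule Xc_mono) (use True in simp)
      also have "Xc k = Xf k" using k by (simp add: Xc_def)
      finally show ?thesis using True False by (simp add: Vf_def)
    next
      case False
      then show ?thesis using \<open>\<not> k' \<le> z0\<close> Yf_mono k by (simp add: Vf_def)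
    qed
  qed
qed

lemma UV_sum: "1 \<le> k \<Longrightarrow> Uf k + Vf k = Xf k + Yf k"
proof (cases "k \<le> z0")
  case True
  assume "1 \<le> k"
  then show ?thesis using True Yf_big[of k] by (simp add: Uf_def Vf_def)
next
  case False
  then show ?thesis by (simp add: Uf_def Vf_def)
qed

lemma sum_Suc: "finite A \<Longrightarrow> (\<Sum>i\<in>A. Suc (f i)) = card A + sum f A"
  by (induction A rule: finite_induct) auto

lemma Gam_ok: "sorted_wrt (\<ge>) Gam" "\<forall>x\<in>set Gam. 0 < x" "part Gam 1 \<le> m + (j + 1)"
proof -
  have "\<forall>x\<in>set (map (\<lambda>k. Suc (Vf k)) [Suc 0..<Suc T]). x \<le> K - 1"
    using Vf_le K_def j2 by fastforce
  moreover have "sorted_wrt (\<ge>) (map (\<lambda>k. Suc (Vf k)) [Suc 0..<Suc T])"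
    by (rule sorted_map_upt1) (simp add: Vf_mono)
  ultimately show "sorted_wrt (\<ge>) Gam" unfolding Gam_def by simp
  show "\<forall>x\<in>set Gam. 0 < x" unfolding Gam_def using K_def j2 by auto
  show "part Gam 1 \<le> m + (j + 1)" unfolding Gam_def K_def by (simp add: part_def)
qed

lemma Del_ok: "sorted_wrt (\<ge>) Del" "\<forall>x\<in>set Del. 0 < x" "part Del 1 \<le> j + 1"
proof -
  have "\<forall>x\<in>set (map (\<lambda>k. Suc (Uf k)) [Suc 0..<Suc T]). x \<le> j + 1"
    using Uf_le by fastforce
  moreover have "sorted_wrt (\<ge>) (map (\<lambda>k. Suc (Uf k)) [Suc 0..<Suc T])"
    by (rule sorted_map_upt1) (simp add: Uf_mono)
  ultimately show "sorted_wrt (\<ge>) Del" unfolding Del_def by simp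
  show "\<forall>x\<in>set Del. 0 < x" unfolding Del_def by auto
  show "part Del 1 \<le> j + 1" unfolding Del_def by (simp add: part_def)
qed

lemma symb_ok: "symb m (j+1) Gam Del"
  using Gam_ok Del_ok by unfold_locales auto

lemma len_GD: "length Gam = length Del" by (simp add: Gam_def Del_def)
lemma part1_Gam: "part Gam 1 = m + j - 1" by (simp add: Gam_def part_def K_def)
lemma part1_Del: "part Del 1 = j + 1" by (simp add: Del_def part_def)

lemma sumX: "(\<Sum>k\<in>{Suc 0..T}. Xf k) = sum_list (tl b) - 2 * L"
proof -
  have "(\<Sum>k\<in>{Suc 0..T}. Xf k) = (\<Sum>k\<in>{Suc 0..T}. (\<lambda>x. x - 2) (part (tl b) k))"
    by (simp add: Xf_def)
  also have "\<dots> = sum_list (map (\<lambda>x. x - 2) (tl b))"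
    using sum_part_gen[of "tl b" T "\<lambda>x. x - 2"] tlb_len T_def by simp
  also have "\<dots> = sum_list (tl b) - 2 * L"
    using sum_list_minus[of "tl b" 2] tlb_ge2 tlb_len by simp
  finally show ?thesis .
qed

lemma sumY: "(\<Sum>k\<in>{Suc 0..T}. Yf k) = sum_list (drop 3 a) + r"
proof -
  have "(\<Sum>k\<in>{Suc 0..T}. Yf k) = sum_list Ylist"
    unfolding Yf_def by (rule sum_part) (use Ylist_len T_def in simp)
  then show ?thesis by (simp add: Ylist_def sum_list_replicate)
qed

lemma sum_a: "sum_list a = 3 * K + sum_list (drop 3 a)"
proof -
  obtain x1 x2 x3 rest where a: "a = x1 # x2 # x3 # rest"
    using alen by (metis Suc_le_length_iff numeral_3_eq_3)
  have "x1 = K" "x3 = K" using a1 a3 K_def as a by (auto simp: part_def)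
  moreover have "x2 = K" using a1 a3 K_def as a
    by (auto simp: part_def)
  ultimately show ?thesis using a by simp
qed

lemma sum_b: "sum_list b = j + sum_list (tl b)"
  using b1 blen alen by (cases b) (auto simp: part_def)

lemma weight:
  "(m + (j+1)) * (j+1) + sum_list Gam + sum_list Del = (m + j) * j + sum_list a + sum_list b"
proof -
  have sG: "sum_list Gam = K - 1 + T + (\<Sum>k\<in>{Suc 0..T}. Vf k)"
    by (simp add: Gam_def sum_list_map_upt1 sum_Suc)
  have sD: "sum_list Del = j + 1 + T + (\<Sum>k\<in>{Suc 0..T}. Uf k)"
    by (simp add: Del_def sum_list_map_upt1 sum_Suc)
  have "(\<Sum>k\<in>{Suc 0..T}. Uf k) + (\<Sum>k\<in>{Suc 0..T}. Vf k) = (\<Sum>k\<in>{Suc 0..T}. Xf k) + (\<Sum>k\<in>{Suc 0..T}. Yf k)"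
    by (simp add: sum.distrib[symmetric] UV_sum)
  also have "\<dots> = sum_list (tl b) - 2 * L + sum_list (drop 3 a) + r" by (simp add: sumX sumY)
  finally have UV: "(\<Sum>k\<in>{Suc 0..T}. Uf k) + (\<Sum>k\<in>{Suc 0..T}. Vf k) = sum_list (tl b) - 2 * L + sum_list (drop 3 a) + r" .
  have "2 * length (tl b) \<le> sum_list (tl b)"
    using tlb_ge2 sum_list_ge[of "tl b" 2] by simp
  then have "2 * L \<le> sum_list (tl b)" using tlb_len by simp
  moreover have "2 * tt + r = m - 1" by (simp add: tt_def r_def)
  moreover have "(m + (j+1))*(j+1) = (m+j)*j + m + 2*j + 1" by (simp add: algebra_simps)
  ultimately show ?thesis using sG sD UV sum_a sum_b m1 j2 unfolding T_def K_def
    by (rule arith_aux)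
qed

lemma T_gt: "z0 < T" using z0_le L3 T_def by simp

lemma part_Cons_Suc: "1 \<le> k \<Longrightarrow> part (x#xs) (Suc k) = part xs k"
  by (cases k) (auto simp: part_def)

lemma part_Gam: "1 \<le> k \<Longrightarrow> k \<le> T \<Longrightarrow> part Gam (Suc k) = Suc (Vf k)"
  by (simp add: Gam_def part_Cons_Suc part_map_upt1)

lemma part_Del: "1 \<le> k \<Longrightarrow> k \<le> T \<Longrightarrow> part Del (Suc k) = Suc (Uf k)"
  by (simp add: Del_def part_Cons_Suc part_map_upt1)

lemma len_Gam: "length Gam = Suc T" by (simp add: Gam_def)

definition "Cimg z = (Uf (Suc z) + m \<le> (if z = 0 then K - 2 else Vf z))"

lemma Vc_eq: "z \<le> z0 \<Longrightarrow> (if z = 0 then K - 2 else Vf z) = Xc z + m"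
  using j2 K_def by (auto simp: Vf_def Xc_def)

lemma Cimg_lt: "z < z0 \<Longrightarrow> \<not> Cimg z"
proof -
  assume z: "z < z0"
  then have u: "Uf (Suc z) = Yf (Suc z) - m" by (simp add: Uf_def)
  have big: "Xc z + m < Yf (Suc z)" using z0_min[of "Suc z"] z by simp
  show ?thesis unfolding Cimg_def Vc_eq[OF less_imp_le[OF z]] u using big by simp
qed

lemma Cimg_z0: "Cimg z0"
proof -
  have u: "Uf (Suc z0) = Xf (Suc z0)" by (simp add: Uf_def)
  have "Xf (Suc z0) \<le> Xc z0"
  proof (cases "z0 = 0")
    case True
    then show ?thesis using Xf_le[of 1] by (simp add: Xc_def)
  next
    case False
    then show ?thesis using Xf_mono[of z0 "Suc z0"] by (simp add: Xc_def)
  qed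
  then show ?thesis unfolding Cimg_def Vc_eq[OF order_refl] u by simp
qed

lemma Xf_rec: "Xf k = (if k \<le> z0 then Vf k - m else Uf k)"
  by (simp add: Uf_def Vf_def)

lemma Yf_rec: "1 \<le> k \<Longrightarrow> Yf k = (if k \<le> z0 then Uf k + m else Vf k)"
  using Yf_big[of k] by (auto simp: Uf_def Vf_def)

lemma part_tlb: "1 \<le> k \<Longrightarrow> k \<le> T \<Longrightarrow> part (tl b) k = (if k \<le> L then Xf k + 2 else 0)"
proof -
  assume k: "1 \<le> k" "k \<le> T"
  show ?thesis
  proof (cases "k \<le> L")
    case True
    then have "part (tl b) k \<in> set (tl b)" using k tlb_len by (simp add: part_def)
    then have "2 \<le> part (tl b) k" using tlb_ge2 by blast
    then show ?thesis using True by (simp add: Xf_def)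
  qed (simp add: part_def L_def)
qed

lemma a_rec: "a = K # K # K # drop 3 a"
proof -
  obtain x1 x2 x3 rest where a: "a = x1 # x2 # x3 # rest"
    using alen by (metis Suc_le_length_iff numeral_3_eq_3)
  have "x1 = K" "x2 = K" "x3 = K" using a1 a3 K_def as a by (auto simp: part_def)
  then show ?thesis using a by simp
qed

lemma b_rec: "b = j # tl b"
  using b1 blen by (cases b) (auto simp: part_def)

lemma drop3a: "drop 3 a = take (length Ylist - r) Ylist"
  by (simp add: Ylist_def)

definition "Fmu = fs m (j+1) Gam Del"

end

lemma qdata_inj:
  assumes q1: "qdata m j1 a1 b1" and q2: "qdata m j2 a2 b2"
    and eq: "qdata.Fmu m j1 a1 b1 = qdata.Fmu m j2 a2 b2"
  shows "j1 = j2 \<and> a1 = a2 \<and> b1 = b2"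
proof -
  interpret A: qdata m j1 a1 b1 by (rule q1)
  interpret B: qdata m j2 a2 b2 by (rule q2)
  interpret SA: symb m "j1+1" A.Gam A.Del by (rule A.symb_ok)
  interpret SB: symb m "j2+1" B.Gam B.Del by (rule B.symb_ok)
  have jj: "j1 = j2" using SA.durfee_j_fs SB.durfee_j_fs eq by (simp add: A.Fmu_def B.Fmu_def)
  have GG: "A.Gam = B.Gam" using SA.durfee_alpha_fs SB.durfee_alpha_fs eq by (simp add: A.Fmu_def B.Fmu_def)
  have DD: "A.Del = B.Del" using SA.durfee_beta_fs SB.durfee_beta_fs eq by (simp add: A.Fmu_def B.Fmu_def)
  have TT: "A.T = B.T" using GG A.len_Gam B.len_Gam by simp
  have LL: "A.L = B.L" using TT unfolding A.T_def B.T_def A.tt_def B.tt_def by simp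
  have KK: "A.K = B.K" using jj by (simp add: A.K_def B.K_def)
  have rr: "A.r = B.r" by (simp add: A.r_def B.r_def)
  have VV: "1 \<le> k \<Longrightarrow> k \<le> A.T \<Longrightarrow> A.Vf k = B.Vf k" for k
    using A.part_Gam[of k] B.part_Gam[of k] GG TT by simp
  have UU: "1 \<le> k \<Longrightarrow> k \<le> A.T \<Longrightarrow> A.Uf k = B.Uf k" for k
    using A.part_Del[of k] B.part_Del[of k] DD TT by simp
  have CC: "z < A.T \<Longrightarrow> A.Cimg z = B.Cimg z" for z
    using VV[of z] UU[of "Suc z"] KK unfolding A.Cimg_def B.Cimg_def by auto
  have zz: "A.z0 = B.z0"
  proof (rule ccontr)
    assume ne: "A.z0 \<noteq> B.z0"
    show False
    proof (cases "A.z0 < B.z0")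
      case True
      then have "\<not> B.Cimg A.z0" by (rule B.Cimg_lt)
      moreover have "A.Cimg A.z0" by (rule A.Cimg_z0)
      ultimately show False using CC[of A.z0] A.T_gt by simp
    next
      case False
      then have lt: "B.z0 < A.z0" using ne by simp
      then have "\<not> A.Cimg B.z0" by (rule A.Cimg_lt)
      moreover have "B.Cimg B.z0" by (rule B.Cimg_z0)
      ultimately show False using CC[of B.z0] B.T_gt TT by simp
    qed
  qed
  have XX: "1 \<le> k \<Longrightarrow> k \<le> A.T \<Longrightarrow> A.Xf k = B.Xf k" for k
    using A.Xf_rec[of k] B.Xf_rec[of k] VV[of k] UU[of k] zz by simp
  have YY: "1 \<le> k \<Longrightarrow> k \<le> A.T \<Longrightarrow> A.Yf k = B.Yf k" for k
    using A.Yf_rec[of k] B.Yf_rec[of k] VV[of k] UU[of k] zz by simp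
  have tlb: "tl b1 = tl b2"
  proof (rule list_eq_parts[where T = A.T])
    show "\<forall>x\<in>set (tl b1). 0 < x" using A.tlb_ge2 by fastforce
    show "\<forall>x\<in>set (tl b2). 0 < x" using B.tlb_ge2 by fastforce
    show "length (tl b1) \<le> A.T" using A.tlb_len A.T_def by simp
    show "length (tl b2) \<le> A.T" using B.tlb_len B.T_def TT by simp
    show "\<forall>k. 1 \<le> k \<and> k \<le> A.T \<longrightarrow> part (tl b1) k = part (tl b2) k"
      using A.part_tlb B.part_tlb XX LL TT by simp
  qed
  have YL: "A.Ylist = B.Ylist"
  proof (rule list_eq_parts[where T = A.T])
    show "\<forall>x\<in>set A.Ylist. 0 < x" by (rule A.Ylist_pos)
    show "\<forall>x\<in>set B.Ylist. 0 < x" by (rule B.Ylist_pos)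
    show "length A.Ylist \<le> A.T" using A.Ylist_len A.T_def by simp
    show "length B.Ylist \<le> A.T" using B.Ylist_len B.T_def TT by simp
    show "\<forall>k. 1 \<le> k \<and> k \<le> A.T \<longrightarrow> part A.Ylist k = part B.Ylist k"
      using YY by (simp add: A.Yf_def B.Yf_def)
  qed
  have "drop 3 a1 = drop 3 a2" using A.drop3a B.drop3a YL rr by simp
  then have "a1 = a2" using A.a_rec B.a_rec KK by metis
  moreover have "b1 = b2" using A.b_rec B.b_rec jj tlb by metis
  ultimately show ?thesis using jj by simp
qed



lemma conj_props:
  assumes "sorted_wrt (\<ge>) ys"
  shows "sorted_wrt (\<ge>) (conjugate ys)" "\<forall>x\<in>set (conjugate ys). 0 < x"
    "part (conjugate ys) 1 \<le> length ys"
proof -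
  show "sorted_wrt (\<ge>) (conjugate ys)" unfolding conj_alt
    by (rule sorted_map_upt1) (simp add: cnt_antimono)
  show "\<forall>x\<in>set (conjugate ys). 0 < x"
  proof
    fix x assume "x \<in> set (conjugate ys)"
    then obtain i where i: "1 \<le> i" "i \<le> foldr max ys 0" "x = cnt ys i"
      unfolding conj_alt by auto
    then have "i \<le> part ys 1" using foldr_max_sorted[OF assms] by simp
    then have "1 \<le> cnt ys i" using cnt_iff[OF assms, of 1 i] i by simp
    then show "0 < x" using i by simp
  qed
  show "part (conjugate ys) 1 \<le> length ys"
    using part_conj[of 1 ys] cnt_le_length by simp
qed

lemma part_le_sum: "part xs k \<le> sum_list (xs::nat list)"
  by (auto simp: part_def intro!: member_le_sum_list)

lemma part_drop: "1 \<le> i \<Longrightarrow> part (drop K xs) i = part xs (K + i)"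
  by (auto simp: part_def)

lemma Q6_data:
  assumes m1: "1 \<le> m" and l: "l \<in> Q6 m n"
  shows "qdata m (durfee_j m l) (durfee_alpha m l) (durfee_beta m l)
       \<and> l = fs m (durfee_j m l) (durfee_alpha m l) (durfee_beta m l) \<and> sum_list l = n"
proof -
  define j where "j = durfee_j m l"
  define a where "a = durfee_alpha m l"
  define b where "b = durfee_beta m l"
  define K where "K = m + j"
  have lp: "sorted_wrt (\<ge>) l" "\<forall>x\<in>set l. 0 < x" and ln: "sum_list l = n"
    and rk: "int m \<in> rank_set l"
    using l by (auto simp: Q6_def Qset_def partitions_def is_partition_def)
  have c: "1 \<le> j" "int (length b) - int (length a) \<ge> 1" "part a 1 = m + j" "part a 2 = m + j"
    "part a 3 = m + j" "smallest b \<ge> 2"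
    using l unfolding Q6_def j_def a_def b_def by (auto simp: Let_def)
  let ?P = "\<lambda>y. y \<le> part l (m + y)"
  have bnd: "?P y \<Longrightarrow> y \<le> sum_list l" for y using part_le_sum[of l "m+y"] by simp
  have jP: "?P j" unfolding j_def durfee_j_def by (rule GreatestI_nat[of _ 0]) (auto intro: bnd)
  have jmax: "part l (K + 1) \<le> j"
  proof (rule ccontr)
    assume "\<not> part l (K + 1) \<le> j"
    then have "?P (j+1)" by (simp add: K_def)
    then have "j + 1 \<le> j" unfolding j_def durfee_j_def by (rule Greatest_le_nat) (auto intro: bnd)
    then show False by simp
  qed
  have lenl: "K \<le> length l"
  proof -
    have "0 < part l K" using jP c(1) by (simp add: K_def)
    then show ?thesis by (auto simp: part_def split: if_splits)
  qed
  define ys where "ys = map (\<lambda>k. part l k - j) [Suc 0..<Suc K]"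
  have ys_s: "sorted_wrt (\<ge>) ys" unfolding ys_def
    by (rule sorted_map_upt1) (simp add: part_antimono[OF lp(1)] diff_le_mono)
  have a_eq: "a = conjugate ys" unfolding a_def ys_def durfee_alpha_alt j_def K_def by simp
  have pa: "1 \<le> i \<Longrightarrow> part a i = cnt ys i" for i using part_conj a_eq by simp
  have lenys: "length ys = K" by (simp add: ys_def)
  have "K \<le> cnt ys 3" using pa[of 3] c(5) K_def by simp
  then have "3 \<le> part ys K" using cnt_iff[OF ys_s, of K 3] K_def c(1) by simp
  then have top: "j + 3 \<le> part l K" using part_map_upt1[of K K] K_def c(1) by (simp add: ys_def)
  have topk: "1 \<le> k \<Longrightarrow> k \<le> K \<Longrightarrow> j + 3 \<le> part l k" for k
    using part_antimono[OF lp(1), of k K] top by simp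
  obtain a_s a_p a_1 where asp: "sorted_wrt (\<ge>) a" "\<forall>x\<in>set a. 0 < x" "part a 1 \<le> length ys"
    using conj_props[OF ys_s] a_eq by auto
  have alen: "3 \<le> length a"
  proof -
    have "0 < part a 3" using c(5) K_def c(1) by simp
    then show ?thesis by (auto simp: part_def split: if_splits)
  qed
  have b_eq: "b = drop K l" by (simp add: b_def durfee_beta_def j_def K_def)
  have pb: "1 \<le> i \<Longrightarrow> part b i = part l (K + i)" for i using b_eq part_drop by simp
  have bs: "sorted_wrt (\<ge>) b" using lp(1) b_eq by (simp add: sorted_wrt_drop)
  have bp: "\<forall>x\<in>set b. 0 < x" using lp(2) b_eq by (auto dest: in_set_dropD)
  have blen: "length a + 1 \<le> length b" using c(2) by simp
  have b1: "part b 1 = j"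
  proof -
    obtain k where k: "1 \<le> k" "int m = int k - 1 - int (part l k)"
      using rk by (auto simp: rank_set_def)
    have "K + 1 \<le> k"
    proof (rule ccontr)
      assume "\<not> K + 1 \<le> k"
      then have "j + 3 \<le> part l k" using topk k(1) by simp
      then show False using k(2) \<open>\<not> K + 1 \<le> k\<close> K_def by linarith
    qed
    then have "part l k \<le> part l (K + 1)" using part_antimono[OF lp(1)] by simp
    then have "k \<le> K + 1" using k(2) jmax K_def by linarith
    then have "k = K + 1" using \<open>K + 1 \<le> k\<close> by simp
    then have "int m = int (K+1) - 1 - int (part l (K+1))" using k(2) by simp
    then have "part l (K+1) = j" using K_def by linarith
    then show ?thesis using pb[of 1] by simp
  qed
  have bne: "b \<noteq> []" using blen by auto
  have b2: "\<forall>x\<in>set b. 2 \<le> x"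
  proof -
    have "2 \<le> Min (set b)" using c(6) bne by (simp add: smallest_def)
    then show ?thesis using bne by auto
  qed
  have j2: "2 \<le> j" using b1 b2 bne by (cases b) (auto simp: part_def)
  have q: "qdata m j a b"
    using m1 j2 asp alen bs b2 b1 blen c(5) lenys K_def by unfold_locales auto
  have recon: "l = fs m j a b"
  proof -
    have "take K l = map (\<lambda>k. j + cnt a k) [Suc 0..<Suc K]"
    proof (rule nth_equalityI)
      show "length (take K l) = length (map (\<lambda>k. j + cnt a k) [Suc 0..<Suc K])" using lenl by simp
      fix i assume i: "i < length (take K l)"
      then have iK: "i < K" by simp
      have "cnt a (Suc i) = part ys (Suc i)" using a_eq cnt_conj[OF ys_s] by simp
      also have "\<dots> = part l (Suc i) - j" using iK by (simp add: ys_def part_map_upt1)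
      finally have "j + cnt a (Suc i) = part l (Suc i)" using topk[of "Suc i"] iK by simp
      then show "take K l ! i = map (\<lambda>k. j + cnt a k) [Suc 0..<Suc K] ! i"
        using iK lenl by (simp add: map_upt1_nth part_def)
    qed
    then show ?thesis unfolding fs_def K_def[symmetric] b_eq by (metis append_take_drop_id)
  qed
  show ?thesis unfolding j_def[symmetric] a_def[symmetric] b_def[symmetric] using q recon ln by blast
qed



lemma qdata_symb: assumes "qdata m j a b" shows "symb m j a b"
proof -
  interpret qdata m j a b by (rule assms)
  show ?thesis
  proof
    show "1 \<le> j" using j2 by simp
    show "\<forall>x\<in>set b. 0 < x" using b2 by fastforce
  qed (use as ap a1 bs b1 in auto)
qed

theorem lemma4p7:
  fixes m n :: nat
  assumes "1 \<le> m" and "1 \<le> n"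
  shows "\<exists>f. inj_on f (Q6 m n) \<and> f ` Q6 m n \<subseteq> P6 m n"
proof -
  let ?f = "\<lambda>l. qdata.Fmu m (durfee_j m l) (durfee_alpha m l) (durfee_beta m l)"
  have inj: "inj_on ?f (Q6 m n)"
  proof (rule inj_onI)
    fix x y assume x: "x \<in> Q6 m n" and y: "y \<in> Q6 m n" and e: "?f x = ?f y"
    have qx: "qdata m (durfee_j m x) (durfee_alpha m x) (durfee_beta m x)"
      and rx: "x = fs m (durfee_j m x) (durfee_alpha m x) (durfee_beta m x)"
      using Q6_data[OF assms(1) x] by auto
    have qy: "qdata m (durfee_j m y) (durfee_alpha m y) (durfee_beta m y)"
      and ry: "y = fs m (durfee_j m y) (durfee_alpha m y) (durfee_beta m y)"
      using Q6_data[OF assms(1) y] by auto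
    have "durfee_j m x = durfee_j m y \<and> durfee_alpha m x = durfee_alpha m y \<and> durfee_beta m x = durfee_beta m y"
      by (rule qdata_inj[OF qx qy e])
    then show "x = y" using rx ry by metis
  qed
  have img: "?f ` Q6 m n \<subseteq> P6 m n"
  proof
    fix mu assume "mu \<in> ?f ` Q6 m n"
    then obtain l where l: "l \<in> Q6 m n" and mu: "mu = ?f l" by auto
    define j where "j = durfee_j m l"
    define a where "a = durfee_alpha m l"
    define b where "b = durfee_beta m l"
    have q: "qdata m j a b" and rl: "l = fs m j a b" and sl: "sum_list l = n"
      using Q6_data[OF assms(1) l] unfolding j_def a_def b_def by auto
    interpret Q: qdata m j a b by (rule q)
    interpret S: symb m "j+1" Q.Gam Q.Del by (rule Q.symb_ok)
    interpret S0: symb m j a b by (rule qdata_symb[OF q])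
    have "mu = Q.Fmu" using mu unfolding j_def a_def b_def by simp
    then have mu': "mu = fs m (j+1) Q.Gam Q.Del" unfolding Q.Fmu_def .
    have sum: "sum_list mu = n"
      using S.sum_fs S0.sum_fs Q.weight sl rl mu' by simp
    have rank: "prank mu = - int m"
      unfolding prank_def mu' S.part1_fs S.length_fs using Q.len_GD by simp
    have "int (part Q.Gam 1) = int m + int (j + 1) - 2"
      using Q.part1_Gam Q.m1 by simp
    then show "mu \<in> P6 m n"
      unfolding P6_def Pset_def partitions_def Let_def
      using S.fs_partition sum rank S.durfee_j_fs S.durfee_alpha_fs S.durfee_beta_fs Q.len_GD Q.part1_Del mu'
      by simp
  qed
  show ?thesis using inj img by blast
qed


end
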